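(* Let $t\ge2$ and $n\ge1$ be integers and let $\lambda$ be a $t$-core of length at most $tn+1$. Then \[\mathrm{rk}(\lambda)=(n_0(\lambda)-n-1)_++\sum_{i=1}^{t-1}(n_i(\lambda)-n)_+ ,\] where $m_+=\max(m,0)$.
   Context: A $t$-core is a partition with no hook length divisible by $t$. $\mathrm{rk}(\lambda)$ (Frobenius rank) is the largest $j$ with $\lambda_j\ge j$. The beta-set of $\lambda$ is $\beta_i(\lambda)=\lambda_i+tn+1-i$ for $1\le i\le tn+1$, and $n_i(\lambda)$ is the number of $\beta_j(\lambda)$ congruent to $i$ modulo $t$, $0\le i\le t-1$. *)

theory Defs
  imports Main
begin

definition is_partition :: "nat list \<Rightarrow> bool" where
  "is_partition lam \<longleftrightarrow> sorted (rev lam) \<and> (\<forall>x\<in>set lam. 0 < x)"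

definition part :: "nat list \<Rightarrow> nat \<Rightarrow> nat" where
  "part lam i = (if 1 \<le> i \<and> i \<le> length lam then lam ! (i - 1) else 0)"

definition conj_part :: "nat list \<Rightarrow> nat \<Rightarrow> nat" where
  "conj_part lam j = card {k. 1 \<le> k \<and> k \<le> length lam \<and> j \<le> part lam k}"

definition cells :: "nat list \<Rightarrow> (nat \<times> nat) set" where
  "cells lam = {(i, j). 1 \<le> i \<and> i \<le> length lam \<and> 1 \<le> j \<and> j \<le> part lam i}"

definition hook :: "nat list \<Rightarrow> nat \<Rightarrow> nat \<Rightarrow> nat" where
  "hook lam i j = (part lam i - j) + (conj_part lam j - i) + 1"

definition is_core :: "nat \<Rightarrow> nat list \<Rightarrow> bool" where
  "is_core t lam \<longleftrightarrow> is_partition lam \<and> (\<forall>(i, j)\<in>cells lam. \<not> t dvd hook lam i j)"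

definition frob_rank :: "nat list \<Rightarrow> nat" where
  "frob_rank lam = Max ({0} \<union> {j. 1 \<le> j \<and> j \<le> length lam \<and> j \<le> part lam j})"

(* beta_i = lambda_i + t n + 1 - i, for 1 <= i <= t n + 1 (nonnegative since i <= t n + 1) *)
definition beta :: "nat \<Rightarrow> nat \<Rightarrow> nat list \<Rightarrow> nat \<Rightarrow> nat" where
  "beta t n lam i = part lam i + t * n + 1 - i"

definition ncount :: "nat \<Rightarrow> nat \<Rightarrow> nat list \<Rightarrow> nat \<Rightarrow> nat" where
  "ncount t n lam r = card {j. 1 \<le> j \<and> j \<le> t * n + 1 \<and> beta t n lam j mod t = r}"

end

theory Submission
  imports Defs
begin

lemma part_mono:
  assumes "is_partition lam" "1 \<le> i" "i \<le> k"
  shows "part lam k \<le> part lam i"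
proof (cases "k \<le> length lam")
  case True
  have "sorted (rev lam)" using assms(1) by (simp add: is_partition_def)
  then have "lam ! (k - 1) \<le> lam ! (i - 1)"
    using sorted_rev_nth_mono[of lam "i - 1" "k - 1"] assms True by auto
  then show ?thesis using assms True by (simp add: part_def)
next
  case False
  then show ?thesis by (simp add: part_def)
qed

lemma part_pos:
  assumes "is_partition lam" "1 \<le> i" "i \<le> length lam"
  shows "0 < part lam i"
  using assms by (auto simp: part_def is_partition_def)

lemma part_pos_len:
  assumes "0 < part lam i"
  shows "1 \<le> i \<and> i \<le> length lam"
  using assms by (auto simp: part_def split: if_splits)

lemma beta_eq:
  assumes "k \<le> t * n + 1"
  shows "beta t n lam k + k = part lam k + (t * n + 1)"
  using assms by (simp add: beta_def)

lemma beta_strict: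
  assumes "is_partition lam" "1 \<le> i" "i < k" "k \<le> t * n + 1"
  shows "beta t n lam k < beta t n lam i"
proof -
  have "part lam k \<le> part lam i" using part_mono assms by simp
  moreover have "beta t n lam k + k = part lam k + (t * n + 1)" using beta_eq assms by simp
  moreover have "beta t n lam i + i = part lam i + (t * n + 1)" using beta_eq assms by simp
  ultimately show ?thesis using assms by linarith
qed

lemma beta_inj:
  assumes "is_partition lam"
  shows "inj_on (beta t n lam) {1..t*n+1}"
proof (rule inj_onI)
  fix x y assume "x \<in> {1..t*n+1}" "y \<in> {1..t*n+1}" "beta t n lam x = beta t n lam y"
  then show "x = y" using beta_strict[OF assms, of x y] beta_strict[OF assms, of y x]
    by (metis atLeastAtMost_iff less_irrefl linorder_neqE_nat)
qed

lemma core_closed: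
  assumes core: "is_core t lam" and t: "t \<ge> 1" and len: "length lam \<le> t * n + 1"
    and i: "1 \<le> i" "i \<le> t * n + 1" and bt: "t \<le> beta t n lam i"
  shows "\<exists>k. 1 \<le> k \<and> k \<le> t * n + 1 \<and> beta t n lam k = beta t n lam i - t"
proof (rule ccontr)
  assume nex: "\<not> ?thesis"
  define N where "N = t * n + 1"
  define b where "b = beta t n lam"
  define c where "c = b i - t"
  have part: "is_partition lam" using core by (simp add: is_core_def)
  have bk: "\<And>k. k \<le> N \<Longrightarrow> b k + k = part lam k + N"
    unfolding b_def N_def by (rule beta_eq)
  have nc: "\<And>k. 1 \<le> k \<Longrightarrow> k \<le> N \<Longrightarrow> b k \<noteq> c" using nex unfolding b_def c_def N_def by auto
  define M where "M = {k. 1 \<le> k \<and> k \<le> N \<and> c < b k}"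
  have iM: "i \<in> M" using i bt t unfolding M_def c_def b_def N_def by auto
  have finM: "finite M" unfolding M_def by (rule finite_subset[of _ "{..N}"]) auto
  define m where "m = Max M"
  have mM: "m \<in> M" unfolding m_def using finM iM Max_in by blast
  have im: "i \<le> m" unfolding m_def using finM iM by simp
  have mN: "m \<le> N" "1 \<le> m" "c < b m" using mM unfolding M_def by auto
  have after: "\<And>k. m < k \<Longrightarrow> k \<le> N \<Longrightarrow> b k < c"
  proof -
    fix k assume "m < k" "k \<le> N"
    then have "k \<notin> M" unfolding m_def using finM Max_ge leD by blast
    then have "\<not> c < b k" using \<open>m < k\<close> \<open>k \<le> N\<close> mN unfolding M_def by auto
    moreover have "b k \<noteq> c" using nc \<open>m < k\<close> \<open>k \<le> N\<close> mN by auto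
    ultimately show "b k < c" by auto
  qed
  have cm: "N \<le> c + m"
  proof (cases "m = N")
    case True then show ?thesis by simp
  next
    case False
    then have "b (m+1) < c" using after mN by auto
    moreover have "b (m+1) + (m+1) = part lam (m+1) + N" using bk[of "m+1"] False mN by simp
    ultimately show ?thesis by linarith
  qed
  define j where "j = c + m + 1 - N"
  have j1: "1 \<le> j" using cm unfolding j_def by simp
  have pm: "j \<le> part lam m" using bk[of m] mN cm unfolding j_def by linarith
  have pm1: "part lam (m+1) < j"
  proof (cases "m = N")
    case True
    then have "part lam (m+1) = 0" using len unfolding part_def N_def by auto
    then show ?thesis using j1 by simp
  next
    case False
    then have "b (m+1) < c" using after mN by auto
    moreover have "b (m+1) + (m+1) = part lam (m+1) + N" using bk[of "m+1"] False mN by simp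
    ultimately show ?thesis using cm unfolding j_def by linarith
  qed
  have conj: "conj_part lam j = m"
  proof -
    have "{k. 1 \<le> k \<and> k \<le> length lam \<and> j \<le> part lam k} = {1..m}"
    proof (intro set_eqI iffI)
      fix k assume "k \<in> {k. 1 \<le> k \<and> k \<le> length lam \<and> j \<le> part lam k}"
      then have k: "1 \<le> k" "j \<le> part lam k" by auto
      have "k \<le> m"
      proof (rule ccontr)
        assume "\<not> k \<le> m"
        then have "part lam k \<le> part lam (m+1)" using part_mono[OF part, of "m+1" k] by auto
        then show False using k pm1 by linarith
      qed
      then show "k \<in> {1..m}" using k by auto
    next
      fix k assume "k \<in> {1..m}"
      then have k: "1 \<le> k" "k \<le> m" by auto
      then have "part lam m \<le> part lam k" using part_mono[OF part] by auto
      then have "j \<le> part lam k" using pm by linarith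
      moreover then have "k \<le> length lam" using part_pos_len[of lam k] j1 by auto
      ultimately show "k \<in> {k. 1 \<le> k \<and> k \<le> length lam \<and> j \<le> part lam k}" using k by auto
    qed
    then show ?thesis unfolding conj_part_def by simp
  qed
  have pim: "part lam m \<le> part lam i" using part_mono[OF part] i im by auto
  have ilen: "i \<le> length lam" using part_pos_len[of lam i] pim pm j1 by auto
  have cell: "(i, j) \<in> cells lam" unfolding cells_def using i ilen j1 pim pm by auto
  have bi: "b i + i = part lam i + N" using bk i unfolding N_def by auto
  have "c + t = b i" using bt unfolding c_def b_def by simp
  then have "hook lam i j = t" unfolding hook_def conj using bi im pim pm cm unfolding j_def
    by linarith
  then show False using core cell unfolding is_core_def by auto
qed

lemma downclosed_eq:
  fixes Q :: "nat set"
  assumes fin: "finite Q" and dc: "\<And>q. Suc q \<in> Q \<Longrightarrow> q \<in> Q"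
  shows "Q = {..<card Q}"
proof -
  have dc2: "\<And>q p. q \<in> Q \<Longrightarrow> p \<le> q \<Longrightarrow> p \<in> Q"
  proof -
    have dd: "\<And>d p. p + d \<in> Q \<Longrightarrow> p \<in> Q"
    proof -
      fix d p show "p + d \<in> Q \<Longrightarrow> p \<in> Q"
      proof (induction d)
        case 0 then show ?case by simp
      next
        case (Suc d)
        have "Suc (p + d) \<in> Q" using Suc.prems by simp
        then have "p + d \<in> Q" by (rule dc)
        then show ?case by (rule Suc.IH)
      qed
    qed
    fix q p assume "q \<in> Q" "p \<le> q"
    then show "p \<in> Q" using dd[of p "q - p"] by simp
  qed
  show ?thesis
  proof (intro set_eqI iffI)
    fix q assume "q \<in> Q"
    then have "{..q} \<subseteq> Q" using dc2[of q] by blast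
    then have "card {..q} \<le> card Q" using fin by (rule card_mono[rotated])
    then show "q \<in> {..<card Q}" by simp
  next
    fix q assume "q \<in> {..<card Q}"
    show "q \<in> Q"
    proof (rule ccontr)
      assume "q \<notin> Q"
      have "Q \<subseteq> {..<q}"
      proof
        fix x assume "x \<in> Q"
        show "x \<in> {..<q}"
        proof (rule ccontr)
          assume "x \<notin> {..<q}"
          then have "q \<le> x" by simp
          then show False using dc2[OF \<open>x \<in> Q\<close>] \<open>q \<notin> Q\<close> by blast
        qed
      qed
      then have "card Q \<le> card {..<q}" by (rule card_mono[rotated]) simp
      then have "card Q \<le> q" by simp
      then show False using \<open>q \<in> {..<card Q}\<close> by simp
    qed
  qed
qed

theorem lemma3p2:
  fixes t n :: nat and lam :: "nat list"
  assumes "t \<ge> 2" and "n \<ge> 1"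
    and "is_core t lam"
    and "length lam \<le> t * n + 1"
  shows "int (frob_rank lam) =
           max (int (ncount t n lam 0) - int n - 1) 0
           + (\<Sum>i = 1..t - 1. max (int (ncount t n lam i) - int n) 0)"
proof -
  define N where "N = t * n + 1"
  define b where "b = beta t n lam"
  define I where "I = {1..N}"
  define B where "B = b ` I"
  have part: "is_partition lam" using assms(3) by (simp add: is_core_def)
  have inj: "inj_on b I" unfolding b_def I_def N_def by (rule beta_inj[OF part])
  have finB: "finite B" unfolding B_def I_def by simp
  have bk: "\<And>k. k \<le> N \<Longrightarrow> b k + k = part lam k + N"
    unfolding b_def N_def by (rule beta_eq)
  have closed: "\<And>x. x \<in> B \<Longrightarrow> t \<le> x \<Longrightarrow> x - t \<in> B"
  proof -
    fix x assume "x \<in> B" "t \<le> x"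
    then obtain i where "i \<in> I" "x = b i" unfolding B_def by auto
    then show "x - t \<in> B" using core_closed[OF assms(3) _ assms(4), of i] assms(1) \<open>t \<le> x\<close>
      unfolding B_def I_def b_def N_def by force
  qed
  define S where "S = {j. 1 \<le> j \<and> j \<le> length lam \<and> j \<le> part lam j}"
  have S_eq: "S = {k \<in> I. N \<le> b k}"
  proof (intro set_eqI iffI)
    fix k assume "k \<in> S"
    then have k: "1 \<le> k" "k \<le> length lam" "k \<le> part lam k" unfolding S_def by auto
    then have "k \<le> N" using assms(4) unfolding N_def by simp
    then show "k \<in> {k \<in> I. N \<le> b k}" using k bk[of k] unfolding I_def by auto
  next
    fix k assume "k \<in> {k \<in> I. N \<le> b k}"
    then have k: "1 \<le> k" "k \<le> N" "N \<le> b k" unfolding I_def by auto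
    then have "k \<le> part lam k" using bk[of k] by linarith
    moreover then have "k \<le> length lam" using part_pos_len[of lam k] k by auto
    ultimately show "k \<in> S" using k unfolding S_def by auto
  qed
  have finS: "finite S" unfolding S_eq I_def by simp
  have fr: "frob_rank lam = Max ({0} \<union> S)" unfolding frob_rank_def S_def by simp
  have rank: "frob_rank lam = card S"
  proof (cases "S = {}")
    case True then show ?thesis using fr by simp
  next
    case False
    define r where "r = Max S"
    have rS: "r \<in> S" unfolding r_def using finS False by simp
    have "S = {1..r}"
    proof (intro set_eqI iffI)
      fix k assume "k \<in> S" then show "k \<in> {1..r}" unfolding r_def using finS S_def by auto
    next
      fix k assume k: "k \<in> {1..r}"
      then have "part lam r \<le> part lam k" using part_mono[OF part] by auto
      then have "k \<le> part lam k" using rS k unfolding S_def by auto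
      moreover then have "k \<le> length lam" using part_pos_len[of lam k] k by auto
      ultimately show "k \<in> S" using k unfolding S_def by auto
    qed
    moreover note fr
    moreover have "Max ({0} \<union> S) = r" unfolding r_def using finS False
      by (simp add: Max_Un)
    ultimately show ?thesis using rS by simp
  qed
  have rank2: "card S = card {x \<in> B. N \<le> x}"
  proof -
    have "{x \<in> B. N \<le> x} = b ` {k \<in> I. N \<le> b k}" unfolding B_def by auto
    moreover have "inj_on b {k \<in> I. N \<le> b k}" using inj by (rule inj_on_subset) auto
    ultimately show ?thesis unfolding S_eq by (simp add: card_image)
  qed
  have nc: "\<And>r. ncount t n lam r = card {x \<in> B. x mod t = r}"
  proof -
    fix r
    have "{x \<in> B. x mod t = r} = b ` {k \<in> I. b k mod t = r}" unfolding B_def by auto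
    moreover have "inj_on b {k \<in> I. b k mod t = r}" using inj by (rule inj_on_subset) auto
    ultimately show "ncount t n lam r = card {x \<in> B. x mod t = r}"
      unfolding ncount_def I_def N_def b_def by (simp add: card_image)
  qed
  define Q where "Q = (\<lambda>r. {q. r + t * q \<in> B})"
  have tpos: "0 < t" using assms(1) by simp
  have injq: "\<And>r. inj (\<lambda>q::nat. r + t * q)" using tpos by (auto simp: inj_def)
  have finQ: "\<And>r. finite (Q r)"
  proof -
    fix r
    have "Q r = (\<lambda>q. r + t * q) -` B" unfolding Q_def by auto
    then show "finite (Q r)" using finite_vimageI[OF finB injq] by simp
  qed
  have Qeq: "\<And>r. Q r = {..<card (Q r)}"
  proof -
    fix r
    show "Q r = {..<card (Q r)}"
    proof (rule downclosed_eq[OF finQ])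
      fix q assume "Suc q \<in> Q r"
      then have "r + t * Suc q \<in> B" unfolding Q_def by simp
      then have "r + t * Suc q - t \<in> B" using closed[of "r + t * Suc q"] by simp
      then show "q \<in> Q r" unfolding Q_def by simp
    qed
  qed
  have img: "\<And>r P. r < t \<Longrightarrow> {x \<in> B. x mod t = r \<and> P x} = (\<lambda>q. r + t * q) ` {q \<in> Q r. P (r + t * q)}"
  proof -
    fix r :: nat and P assume rt: "r < t"
    show "{x \<in> B. x mod t = r \<and> P x} = (\<lambda>q. r + t * q) ` {q \<in> Q r. P (r + t * q)}"
    proof (intro set_eqI iffI)
      fix x assume x: "x \<in> {x \<in> B. x mod t = r \<and> P x}"
      then have xe: "x = r + t * (x div t)" using mod_mult_div_eq[of x t] by simp
      show "x \<in> (\<lambda>q. r + t * q) ` {q \<in> Q r. P (r + t * q)}"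
      proof (rule image_eqI[of _ _ "x div t"])
        show "x = r + t * (x div t)" by (rule xe)
        show "x div t \<in> {q \<in> Q r. P (r + t * q)}" using x xe unfolding Q_def by simp
      qed
    next
      fix x assume "x \<in> (\<lambda>q. r + t * q) ` {q \<in> Q r. P (r + t * q)}"
      then show "x \<in> {x \<in> B. x mod t = r \<and> P x}" using rt unfolding Q_def by auto
    qed
  qed
  have ncQ: "\<And>r. r < t \<Longrightarrow> ncount t n lam r = card (Q r)"
  proof -
    fix r :: nat assume rt: "r < t"
    have "{x \<in> B. x mod t = r} = {x \<in> B. x mod t = r \<and> True}" by simp
    also have "\<dots> = (\<lambda>q. r + t * q) ` {q \<in> Q r. True}" using img[OF rt] by blast
    finally show "ncount t n lam r = card (Q r)" unfolding nc
      using card_image[OF inj_on_subset[OF injq]] by simp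
  qed
  have split: "card {x \<in> B. N \<le> x} = (\<Sum>r<t. card {x \<in> B. x mod t = r \<and> N \<le> x})"
  proof -
    have "{x \<in> B. N \<le> x} = (\<Union>r\<in>{..<t}. {x \<in> B. x mod t = r \<and> N \<le> x})"
      using tpos by auto
    moreover have "card (\<Union>r\<in>{..<t}. {x \<in> B. x mod t = r \<and> N \<le> x}) = (\<Sum>r<t. card {x \<in> B. x mod t = r \<and> N \<le> x})"
      by (rule card_UN_disjoint) (use finB in auto)
    ultimately show ?thesis by simp
  qed
  have piece: "\<And>r. r < t \<Longrightarrow> card {x \<in> B. x mod t = r \<and> N \<le> x} = card {q. q < card (Q r) \<and> N \<le> r + t * q}"
  proof -
    fix r :: nat assume rt: "r < t"
    have "card {x \<in> B. x mod t = r \<and> N \<le> x} = card {q \<in> Q r. N \<le> r + t * q}"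
      unfolding img[OF rt] using card_image[OF inj_on_subset[OF injq]] by simp
    also have "{q \<in> Q r. N \<le> r + t * q} = {q. q < card (Q r) \<and> N \<le> r + t * q}"
      using Qeq[of r] by auto
    finally show "card {x \<in> B. x mod t = r \<and> N \<le> x} = card {q. q < card (Q r) \<and> N \<le> r + t * q}" .
  qed
  have p0: "\<And>c. card {q. q < c \<and> N \<le> 0 + t * q} = c - (n + 1)"
  proof -
    fix c
    have "{q. q < c \<and> N \<le> 0 + t * q} = {n+1..<c}"
    proof (intro set_eqI iffI)
      fix q assume "q \<in> {q. q < c \<and> N \<le> 0 + t * q}"
      then have q: "q < c" "t * n + 1 \<le> t * q" unfolding N_def by auto
      have "n + 1 \<le> q"
      proof (rule ccontr)
        assume "\<not> n + 1 \<le> q" then have "q \<le> n" by simp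
        then have "t * q \<le> t * n" by (rule mult_le_mono2)
        then show False using q by linarith
      qed
      then show "q \<in> {n+1..<c}" using q by simp
    next
      fix q assume "q \<in> {n+1..<c}"
      then have q: "n + 1 \<le> q" "q < c" by auto
      have "t * (n + 1) \<le> t * q" using q(1) by (rule mult_le_mono2)
      then have "t * n + t \<le> t * q" by (simp add: distrib_left)
      then have "N \<le> 0 + t * q" using tpos unfolding N_def by linarith
      then show "q \<in> {q. q < c \<and> N \<le> 0 + t * q}" using q by simp
    qed
    then show "card {q. q < c \<and> N \<le> 0 + t * q} = c - (n + 1)" by simp
  qed
  have pr: "\<And>c r. 1 \<le> r \<Longrightarrow> r < t \<Longrightarrow> card {q. q < c \<and> N \<le> r + t * q} = c - n"
  proof -
    fix c r :: nat assume r: "1 \<le> r" "r < t"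
    have "{q. q < c \<and> N \<le> r + t * q} = {n..<c}"
    proof (intro set_eqI iffI)
      fix q assume "q \<in> {q. q < c \<and> N \<le> r + t * q}"
      then have q: "q < c" "t * n + 1 \<le> r + t * q" unfolding N_def by auto
      have "n \<le> q"
      proof (rule ccontr)
        assume "\<not> n \<le> q" then have "q + 1 \<le> n" by simp
        then have "t * (q + 1) \<le> t * n" by (rule mult_le_mono2)
        then have "t * q + t \<le> t * n" by (simp add: distrib_left)
        then show False using q r by linarith
      qed
      then show "q \<in> {n..<c}" using q by simp
    next
      fix q assume "q \<in> {n..<c}"
      then have q: "n \<le> q" "q < c" by auto
      have "t * n \<le> t * q" using q(1) by (rule mult_le_mono2)
      then have "N \<le> r + t * q" using r unfolding N_def by linarith
      then show "q \<in> {q. q < c \<and> N \<le> r + t * q}" using q by simp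
    qed
    then show "card {q. q < c \<and> N \<le> r + t * q} = c - n" by simp
  qed
  have "int (frob_rank lam) = (\<Sum>r<t. int (card {x \<in> B. x mod t = r \<and> N \<le> x}))"
    using rank rank2 split by simp
  also have "\<dots> = (\<Sum>r\<in>{0..<t}. int (card {q. q < card (Q r) \<and> N \<le> r + t * q}))"
    using piece by (simp add: atLeast0LessThan)
  also have "\<dots> = int (card {q. q < card (Q 0) \<and> N \<le> 0 + t * q})
      + (\<Sum>r\<in>{1..<t}. int (card {q. q < card (Q r) \<and> N \<le> r + t * q}))"
    using tpos by (subst sum.atLeast_Suc_lessThan) auto
  also have "\<dots> = int (card (Q 0) - (n + 1)) + (\<Sum>r\<in>{1..t-1}. int (card (Q r) - n))"
  proof -
    have "(\<Sum>r\<in>{1..<t}. int (card {q. q < card (Q r) \<and> N \<le> r + t * q})) = (\<Sum>r\<in>{1..t-1}. int (card (Q r) - n))"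
      by (rule sum.cong) (use tpos pr in auto)
    moreover have "card {q. q < card (Q 0) \<and> N \<le> 0 + t * q} = card (Q 0) - (n + 1)" by (rule p0)
    ultimately show ?thesis by simp
  qed
  also have "\<dots> = max (int (ncount t n lam 0) - int n - 1) 0
           + (\<Sum>i = 1..t - 1. max (int (ncount t n lam i) - int n) 0)"
  proof -
    have "(\<Sum>r\<in>{1..t-1}. int (card (Q r) - n)) = (\<Sum>i = 1..t - 1. max (int (ncount t n lam i) - int n) 0)"
      by (rule sum.cong) (use ncQ tpos in auto)
    moreover have "int (card (Q 0) - (n + 1)) = max (int (ncount t n lam 0) - int n - 1) 0"
      using ncQ[of 0] tpos by auto
    ultimately show ?thesis by simp
  qed
  finally show ?thesis .
qed

end
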